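(* Fix $\alpha \in (1/2, 1)$ and $\varepsilon>0$. Then there exists $n_0$ such that the following holds for all $n>n_0$: every $n$-vertex graph $G$ with at least $\lfloor n^2/4\rfloor+1$ edges and $b(G)<\alpha n/2$ satisfies $$t(G) > (\alpha(1-\alpha)-\varepsilon) \frac{n^2}{4}.$$
   Context: Graphs are finite and simple. A book of size $b$ in a graph is an edge that lies in $b$ triangles; $b(G)$ denotes the maximum size of a book in $G$, i.e. the maximum, over all edges $e$ of $G$, of the number of triangles of $G$ containing $e$. $t(G)$ denotes the number of triangles in $G$. *)

theory Defs
  imports Complex_Main
begin

definition simple_graph :: "'a set \<Rightarrow> 'a set set \<Rightarrow> bool" where
  "simple_graph V E \<longleftrightarrow> finite V \<and> (\<forall>e\<in>E. e \<subseteq> V \<and> card e = 2)"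

definition triangles :: "'a set \<Rightarrow> 'a set set \<Rightarrow> 'a set set" where
  "triangles V E = {T. T \<subseteq> V \<and> card T = 3 \<and> (\<forall>x\<in>T. \<forall>y\<in>T. x \<noteq> y \<longrightarrow> {x, y} \<in> E)}"

definition num_triangles :: "'a set \<Rightarrow> 'a set set \<Rightarrow> nat" where
  "num_triangles V E = card (triangles V E)"

definition book_size :: "'a set \<Rightarrow> 'a set set \<Rightarrow> 'a set \<Rightarrow> nat" where
  "book_size V E e = card {T \<in> triangles V E. e \<subseteq> T}"

definition max_book :: "'a set \<Rightarrow> 'a set set \<Rightarrow> nat" where
  "max_book V E = Max (insert 0 (book_size V E ` E))"

end

theory Submission
  imports Defs
begin

declare sum_of_bool_eq[simp del]

locale sg =
  fixes V :: "nat set" and E :: "nat set set"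
  assumes sg: "simple_graph V E"
begin

definition adj :: "nat \<Rightarrow> nat \<Rightarrow> bool" where "adj x y \<longleftrightarrow> {x,y} \<in> E"

lemma finV: "finite V" using sg unfolding simple_graph_def by blast
lemma edgeD: "e \<in> E \<Longrightarrow> e \<subseteq> V \<and> card e = 2" using sg unfolding simple_graph_def by blast
lemma finE: "finite E"
proof -
  have "E \<subseteq> Pow V" using edgeD by blast
  moreover have "finite (Pow V)" using finV by simp
  ultimately show ?thesis by (rule finite_subset)
qed

lemma adj_sym: "adj x y \<longleftrightarrow> adj y x" unfolding adj_def by (metis insert_commute)
lemma adj_irr: "\<not> adj x x"
proof
  assume "adj x x" then have "{x} \<in> E" by (simp add: adj_def)
  then have "card {x} = 2" using edgeD by blast
  then show False by simp
qed
lemma adj_V: "adj x y \<Longrightarrow> x \<in> V \<and> y \<in> V"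
  unfolding adj_def using edgeD by blast

lemma sum_ind_card: "finite S \<Longrightarrow> (\<Sum>p\<in>S. (of_bool (P p)::real)) = real (card {p\<in>S. P p})"
proof -
  assume "finite S"
  then have "(\<Sum>p\<in>S. (of_bool (P p)::real)) = real (card (S \<inter> {p. P p}))" using \<open>finite S\<close> by (rule sum_of_bool_eq)
  also have "S \<inter> {p. P p} = {p\<in>S. P p}" by blast
  finally show ?thesis .
qed

definition deg :: "nat \<Rightarrow> real" where "deg x = (\<Sum>y\<in>V. of_bool (adj x y))"

lemma handshake: "(\<Sum>x\<in>V. deg x) = 2 * real (card E)"
proof -
  have "(\<Sum>x\<in>V. deg x) = (\<Sum>p\<in>V\<times>V. of_bool (adj (fst p) (snd p)))"
    unfolding deg_def by (simp add: sum.cartesian_product split_def)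
  also have "\<dots> = real (card {p\<in>V\<times>V. adj (fst p) (snd p)})"
    using finV by (simp add: sum_ind_card)
  also have "{p\<in>V\<times>V. adj (fst p) (snd p)} = (\<Union>e\<in>E. {p. {fst p, snd p} = e})"
  proof
    show "{p\<in>V\<times>V. adj (fst p) (snd p)} \<subseteq> (\<Union>e\<in>E. {p. {fst p, snd p} = e})"
      unfolding adj_def by blast
    show "(\<Union>e\<in>E. {p. {fst p, snd p} = e}) \<subseteq> {p\<in>V\<times>V. adj (fst p) (snd p)}"
    proof
      fix p assume "p \<in> (\<Union>e\<in>E. {p. {fst p, snd p} = e})"
      then have "{fst p, snd p} \<in> E" by blast
      then have "adj (fst p) (snd p)" by (simp add: adj_def)
      then show "p \<in> {p\<in>V\<times>V. adj (fst p) (snd p)}" using adj_V by (simp add: mem_Times_iff)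
    qed
  qed
  also have "card \<dots> = (\<Sum>e\<in>E. card {p. {fst p, snd p} = e})"
  proof (rule card_UN_disjoint[OF finE])
    show "\<forall>e\<in>E. finite {p. {fst p, snd p} = e}"
    proof
      fix e assume "e \<in> E"
      have "{p. {fst p, snd p} = e} \<subseteq> V \<times> V" using edgeD[OF \<open>e\<in>E\<close>] by (auto simp: mem_Times_iff)
      then show "finite {p. {fst p, snd p} = e}" by (rule finite_subset[OF _ finite_cartesian_product[OF finV finV]])
    qed
    show "\<forall>i\<in>E. \<forall>j\<in>E. i \<noteq> j \<longrightarrow> {p. {fst p, snd p} = i} \<inter> {p. {fst p, snd p} = j} = {}" by blast
  qed
  also have "\<dots> = (\<Sum>e\<in>E. 2)"
  proof (rule sum.cong[OF refl])
    fix e assume "e \<in> E"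
    then have "card e = 2" using edgeD by blast
    then obtain u v where uv: "e = {u,v}" "u \<noteq> v" by (auto simp: card_2_iff)
    have "{p. {fst p, snd p} = e} = {(u,v),(v,u)}"
    proof (rule set_eqI)
      fix p :: "nat \<times> nat" obtain a b where p: "p = (a,b)" by fastforce
      show "p \<in> {p. {fst p, snd p} = e} \<longleftrightarrow> p \<in> {(u,v),(v,u)}"
        unfolding p uv by (simp add: doubleton_eq_iff)
    qed
    then show "card {p. {fst p, snd p} = e} = 2" using uv by simp
  qed
  finally show ?thesis by simp
qed

lemma fin_tri: "finite (triangles V E)"
proof -
  have "triangles V E \<subseteq> Pow V" unfolding triangles_def by blast
  moreover have "finite (Pow V)" using finV by simp
  ultimately show ?thesis by (rule finite_subset)
qed

lemma tri_mem: "adj x y \<Longrightarrow> adj y z \<Longrightarrow> adj x z \<Longrightarrow> {x,y,z} \<in> triangles V E"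
proof -
  assume a: "adj x y" "adj y z" "adj x z"
  have d: "x \<noteq> y" "y \<noteq> z" "x \<noteq> z" using a adj_irr by metis+
  have "{x,y,z} \<subseteq> V" using a adj_V by blast
  moreover have "card {x,y,z} = 3" using d by simp
  moreover have "\<forall>u\<in>{x,y,z}. \<forall>w\<in>{x,y,z}. u \<noteq> w \<longrightarrow> {u,w} \<in> E"
    using a adj_sym unfolding adj_def by auto
  ultimately show ?thesis unfolding triangles_def by blast
qed

lemma tri_adj: "T \<in> triangles V E \<Longrightarrow> u \<in> T \<Longrightarrow> w \<in> T \<Longrightarrow> u \<noteq> w \<Longrightarrow> adj u w"
  unfolding triangles_def adj_def by blast

definition tau :: real where
  "tau = (\<Sum>x\<in>V. \<Sum>y\<in>V. \<Sum>z\<in>V. of_bool (adj x y \<and> adj y z \<and> adj x z))"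

lemma tau_le: "tau \<le> 6 * real (num_triangles V E)"
proof -
  let ?S = "{p\<in>V\<times>V\<times>V. adj (fst p) (fst (snd p)) \<and> adj (fst (snd p)) (snd (snd p)) \<and> adj (fst p) (snd (snd p))}"
  let ?F = "\<lambda>T. {p. fst p \<in> T \<and> fst (snd p) \<in> T \<and> snd (snd p) \<in> T \<and> fst p \<noteq> fst (snd p) \<and> fst (snd p) \<noteq> snd (snd p) \<and> fst p \<noteq> snd (snd p)}"
  have "tau = (\<Sum>p\<in>V\<times>V\<times>V. of_bool (adj (fst p) (fst (snd p)) \<and> adj (fst (snd p)) (snd (snd p)) \<and> adj (fst p) (snd (snd p))))"
    unfolding tau_def by (simp add: sum.cartesian_product split_def)
  also have "\<dots> = real (card ?S)" using finV by (simp add: sum_ind_card)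
  finally have t1: "tau = real (card ?S)" .
  have sub: "?S \<subseteq> (\<Union>T\<in>triangles V E. ?F T)"
  proof
    fix p assume p: "p \<in> ?S"
    obtain x y z where pe: "p = (x,y,z)" by (cases p) auto
    have a: "adj x y" "adj y z" "adj x z" using p pe by auto
    have "x \<noteq> y" "y \<noteq> z" "x \<noteq> z" using a adj_irr by metis+
    then have "p \<in> ?F {x,y,z}" using pe by simp
    then show "p \<in> (\<Union>T\<in>triangles V E. ?F T)" using tri_mem[OF a] by blast
  qed
  have f6: "card (?F T) \<le> 6" if "T \<in> triangles V E" for T
  proof -
    have "card T = 3" using that unfolding triangles_def by blast
    then obtain a b c where T: "T = {a,b,c}" by (auto simp: card_3_iff)
    have "?F T \<subseteq> set [(a,b,c),(a,c,b),(b,a,c),(b,c,a),(c,a,b),(c,b,a)]"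
    proof
      fix p assume "p \<in> ?F T"
      then show "p \<in> set [(a,b,c),(a,c,b),(b,a,c),(b,c,a),(c,a,b),(c,b,a)]"
        unfolding T by (cases p) auto
    qed
    then have "card (?F T) \<le> card (set [(a,b,c),(a,c,b),(b,a,c),(b,c,a),(c,a,b),(c,b,a)])"
      by (rule card_mono[OF finite_set])
    also have "\<dots> \<le> 6" using card_length[of "[(a,b,c),(a,c,b),(b,a,c),(b,c,a),(c,a,b),(c,b,a)]"] by simp
    finally show ?thesis .
  qed
  have "card ?S \<le> card (\<Union>T\<in>triangles V E. ?F T)"
  proof (rule card_mono[OF _ sub])
    show "finite (\<Union>T\<in>triangles V E. ?F T)"
    proof (rule finite_subset[OF _ finite_cartesian_product[OF finV finite_cartesian_product[OF finV finV]]])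
      show "(\<Union>T\<in>triangles V E. ?F T) \<subseteq> V \<times> V \<times> V"
        unfolding triangles_def by (auto simp: mem_Times_iff)
    qed
  qed
  also have "\<dots> \<le> (\<Sum>T\<in>triangles V E. card (?F T))" by (rule card_UN_le[OF fin_tri])
  also have "\<dots> \<le> (\<Sum>T\<in>triangles V E. 6)" by (rule sum_mono) (rule f6)
  also have "\<dots> = 6 * num_triangles V E" by (simp add: num_triangles_def)
  finally show ?thesis using t1 by simp
qed

definition common :: "nat \<Rightarrow> nat \<Rightarrow> real" where
  "common x y = (\<Sum>z\<in>V. of_bool (adj x z \<and> adj y z))"

lemma common_le: "adj x y \<Longrightarrow> common x y \<le> real (max_book V E)"
proof -
  assume xy: "adj x y"
  have "common x y = real (card {z\<in>V. adj x z \<and> adj y z})"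
    unfolding common_def using finV by (simp add: sum_ind_card)
  also have "card {z\<in>V. adj x z \<and> adj y z} \<le> card {T \<in> triangles V E. {x,y} \<subseteq> T}"
  proof (rule card_inj_on_le[where f = "\<lambda>z. {x,y,z}"])
    show "inj_on (\<lambda>z. {x,y,z}) {z\<in>V. adj x z \<and> adj y z}"
    proof
      fix z z' assume z: "z \<in> {z\<in>V. adj x z \<and> adj y z}" and z': "z' \<in> {z\<in>V. adj x z \<and> adj y z}"
        and eq: "{x,y,z} = {x,y,z'}"
      have "z \<noteq> x" "z \<noteq> y" "z' \<noteq> x" "z' \<noteq> y" using z z' adj_irr by auto
      then show "z = z'" using eq by (metis insertE insertI1 insert_commute singletonD)
    qed
    show "(\<lambda>z. {x,y,z}) ` {z\<in>V. adj x z \<and> adj y z} \<subseteq> {T \<in> triangles V E. {x,y} \<subseteq> T}"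
    proof
      fix T assume "T \<in> (\<lambda>z. {x,y,z}) ` {z\<in>V. adj x z \<and> adj y z}"
      then obtain z where z: "adj x z" "adj y z" and T: "T = {x,y,z}" by blast
      have "adj y z" using z by simp
      then show "T \<in> {T \<in> triangles V E. {x,y} \<subseteq> T}" using tri_mem[OF xy _ z(1)] T by blast
    qed
    show "finite {T \<in> triangles V E. {x,y} \<subseteq> T}" using fin_tri by simp
  qed
  also have "\<dots> = book_size V E {x,y}" by (simp add: book_size_def)
  also have "\<dots> \<le> max_book V E"
  proof -
    have "{x,y} \<in> E" using xy by (simp add: adj_def)
    moreover have "finite (insert 0 (book_size V E ` E))" using finE by simp
    ultimately show ?thesis unfolding max_book_def by (simp add: Max_ge)
  qed
  finally show ?thesis by simp
qed

definition Iord :: "nat set \<Rightarrow> real" where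
  "Iord A = (\<Sum>x\<in>V. \<Sum>y\<in>V. of_bool (adj x y \<and> (x \<in> A \<longleftrightarrow> y \<in> A)))"

lemma deg_sq_sum: "(\<Sum>v\<in>V. \<Sum>x\<in>V. \<Sum>y\<in>V. (of_bool (adj x y \<and> adj v x)::real)) = (\<Sum>x\<in>V. deg x * deg x)"
proof -
  have "(\<Sum>v\<in>V. \<Sum>x\<in>V. \<Sum>y\<in>V. (of_bool (adj x y \<and> adj v x)::real))
      = (\<Sum>v\<in>V. \<Sum>x\<in>V. of_bool (adj v x) * deg x)"
    unfolding deg_def by (simp add: sum_distrib_left of_bool_conj mult.commute)
  also have "\<dots> = (\<Sum>x\<in>V. \<Sum>v\<in>V. of_bool (adj x v) * deg x)"
    by (subst sum.swap) (simp add: adj_sym)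
  also have "\<dots> = (\<Sum>x\<in>V. deg x * deg x)"
    unfolding deg_def by (simp add: sum_distrib_right)
  finally show ?thesis .
qed

lemma avg_exists:
  assumes ne: "V \<noteq> {}" and m4: "real (card V) ^ 2 \<le> 4 * real (card E)"
  shows "\<exists>v\<in>V. real (card V) * Iord {x\<in>V. adj v x} \<le> 2 * tau"
proof -
  let ?n = "real (card V)"
  let ?S = "(\<Sum>x\<in>V. deg x)"
  let ?Q = "(\<Sum>x\<in>V. deg x * deg x)"
  have pw: "(of_bool (adj x y \<and> (adj v x \<longleftrightarrow> adj v y))::real) = of_bool (adj x y) - of_bool (adj x y \<and> adj v x)
     - of_bool (adj x y \<and> adj v y) + 2 * of_bool (adj v x \<and> adj x y \<and> adj v y)" for v x y
    by (cases "adj x y"; cases "adj v x"; cases "adj v y") auto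
  have I: "Iord {x\<in>V. adj v x} = (\<Sum>x\<in>V. \<Sum>y\<in>V. (of_bool (adj x y \<and> (adj v x \<longleftrightarrow> adj v y))::real))" for v
    unfolding Iord_def by (intro sum.cong refl) auto
  have sum1: "(\<Sum>v\<in>V. \<Sum>x\<in>V. \<Sum>y\<in>V. (of_bool (adj x y)::real)) = ?n * ?S"
    unfolding deg_def by simp
  have sum2: "(\<Sum>v\<in>V. \<Sum>x\<in>V. \<Sum>y\<in>V. (of_bool (adj x y \<and> adj v x)::real)) = ?Q" by (rule deg_sq_sum)
  have sum3: "(\<Sum>v\<in>V. \<Sum>x\<in>V. \<Sum>y\<in>V. (of_bool (adj x y \<and> adj v y)::real)) = ?Q"
  proof -
    have "(\<Sum>v\<in>V. \<Sum>x\<in>V. \<Sum>y\<in>V. (of_bool (adj x y \<and> adj v y)::real))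
        = (\<Sum>v\<in>V. \<Sum>y\<in>V. \<Sum>x\<in>V. (of_bool (adj y x \<and> adj v y)::real))"
    proof (rule sum.cong[OF refl])
      fix v show "(\<Sum>x\<in>V. \<Sum>y\<in>V. (of_bool (adj x y \<and> adj v y)::real)) = (\<Sum>y\<in>V. \<Sum>x\<in>V. of_bool (adj y x \<and> adj v y))"
        by (subst sum.swap) (simp add: adj_sym)
    qed
    also have "\<dots> = ?Q" by (rule deg_sq_sum)
    finally show ?thesis .
  qed
  have sum4: "(\<Sum>v\<in>V. \<Sum>x\<in>V. \<Sum>y\<in>V. (of_bool (adj v x \<and> adj x y \<and> adj v y)::real)) = tau"
    unfolding tau_def ..
  have tot: "(\<Sum>v\<in>V. Iord {x\<in>V. adj v x}) = ?n * ?S - 2 * ?Q + 2 * tau"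
  proof -
    have "(\<Sum>v\<in>V. Iord {x\<in>V. adj v x}) = (\<Sum>v\<in>V. \<Sum>x\<in>V. \<Sum>y\<in>V. (of_bool (adj x y)::real))
      - (\<Sum>v\<in>V. \<Sum>x\<in>V. \<Sum>y\<in>V. (of_bool (adj x y \<and> adj v x)::real))
      - (\<Sum>v\<in>V. \<Sum>x\<in>V. \<Sum>y\<in>V. (of_bool (adj x y \<and> adj v y)::real))
      + 2 * (\<Sum>v\<in>V. \<Sum>x\<in>V. \<Sum>y\<in>V. (of_bool (adj v x \<and> adj x y \<and> adj v y)::real))"
      unfolding I pw by (simp only: sum.distrib sum_subtractf sum_distrib_left[symmetric])
    then show ?thesis using sum1 sum2 sum3 sum4 by simp
  qed
  have cs: "0 \<le> (\<Sum>x\<in>V. (2 * deg x - ?n)^2)" by (simp add: sum_nonneg)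
  also have "(\<Sum>x\<in>V. (2 * deg x - ?n)^2) = 4 * ?Q - 4 * ?n * ?S + ?n ^ 3"
    by (simp add: power2_eq_square algebra_simps sum.distrib sum_subtractf sum_distrib_left power3_eq_cube)
  finally have cs2: "0 \<le> 4 * ?Q - 4 * ?n * ?S + ?n ^ 3" .
  have S2: "?S = 2 * real (card E)" by (rule handshake)
  have npos: "0 < ?n" using ne finV by (simp add: card_gt_0_iff)
  have "?n * ?S \<le> 2 * ?Q"
  proof -
    have "?n ^ 2 \<le> 2 * ?S" using m4 S2 by simp
    then have "?n * ?n ^ 2 \<le> ?n * (2 * ?S)" using npos by (intro mult_left_mono) auto
    then have "?n ^ 3 \<le> 2 * ?n * ?S" by (simp add: power2_eq_square power3_eq_cube algebra_simps)
    then show ?thesis using cs2 by linarith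
  qed
  then have sumle: "(\<Sum>v\<in>V. Iord {x\<in>V. adj v x}) \<le> 2 * tau" using tot by linarith
  show ?thesis
  proof (rule ccontr)
    assume "\<not> ?thesis"
    then have "\<forall>v\<in>V. 2 * tau < ?n * Iord {x\<in>V. adj v x}" by (simp add: not_le)
    then have "(\<Sum>v\<in>V. 2 * tau) < (\<Sum>v\<in>V. ?n * Iord {x\<in>V. adj v x})"
      using ne finV by (intro sum_strict_mono) auto
    then have "?n * (2 * tau) < ?n * (\<Sum>v\<in>V. Iord {x\<in>V. adj v x})" by (simp add: sum_distrib_left)
    then have "2 * tau < (\<Sum>v\<in>V. Iord {x\<in>V. adj v x})" using npos by simp
    then show False using sumle by simp
  qed
qed

lemma exists_min: "\<exists>A. A \<subseteq> V \<and> (\<forall>B. B \<subseteq> V \<longrightarrow> Iord A \<le> Iord B)"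
proof -
  have fin: "finite (Iord ` Pow V)" using finV by simp
  have ne: "Iord ` Pow V \<noteq> {}" by blast
  have "Min (Iord ` Pow V) \<in> Iord ` Pow V" by (rule Min_in[OF fin ne])
  then obtain A where A: "A \<in> Pow V" "Iord A = Min (Iord ` Pow V)" by (metis imageE)
  have "Iord A \<le> Iord B" if "B \<subseteq> V" for B
  proof -
    have "Iord B \<in> Iord ` Pow V" using that by simp
    then have "Min (Iord ` Pow V) \<le> Iord B" by (rule Min_le[OF fin])
    then show ?thesis using A(2) by simp
  qed
  then show ?thesis using A(1) by blast
qed
lemma flip:
  fixes A :: "nat set"
  assumes xV: "x \<in> V"
  defines "A' \<equiv> (if x \<in> A then A - {x} else insert x A)"
  shows "Iord A' = Iord A + 2 * ((\<Sum>y\<in>V. of_bool (adj x y \<and> \<not> (x \<in> A \<longleftrightarrow> y \<in> A)))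
                                 - (\<Sum>y\<in>V. of_bool (adj x y \<and> (x \<in> A \<longleftrightarrow> y \<in> A))))"
proof -
  define h where "h w = (of_bool (adj x w \<and> \<not> (x \<in> A \<longleftrightarrow> w \<in> A)) - of_bool (adj x w \<and> (x \<in> A \<longleftrightarrow> w \<in> A)) :: real)" for w
  have mem: "u \<in> A' \<longleftrightarrow> (if u = x then u \<notin> A else u \<in> A)" for u
    unfolding A'_def by auto
  have g: "(of_bool (adj u w \<and> (u \<in> A' \<longleftrightarrow> w \<in> A'))::real) = of_bool (adj u w \<and> (u \<in> A \<longleftrightarrow> w \<in> A))
      + ((if u = x then h w else 0) + (if w = x then h u else 0))" for u w
    unfolding h_def mem using adj_irr[of x] adj_sym[of u x]
    by (cases "u = x"; cases "w = x"; cases "adj u w"; cases "u \<in> A"; cases "w \<in> A") auto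
  have "Iord A' = Iord A + (\<Sum>u\<in>V. \<Sum>w\<in>V. ((if u = x then h w else 0) + (if w = x then h u else 0)))"
    unfolding Iord_def g by (simp only: sum.distrib)
  also have "(\<Sum>u\<in>V. \<Sum>w\<in>V. ((if u = x then h w else 0) + (if w = x then h u else 0)))
      = (\<Sum>u\<in>V. \<Sum>w\<in>V. (if u = x then h w else 0)) + (\<Sum>u\<in>V. \<Sum>w\<in>V. (if w = x then h u else 0))"
    by (simp only: sum.distrib)
  also have "(\<Sum>u\<in>V. \<Sum>w\<in>V. (if u = x then h w else 0)) = (\<Sum>w\<in>V. h w)"
  proof -
    have "(\<Sum>w\<in>V. (if u = x then h w else 0)) = (if u = x then sum h V else 0)" for u by simp
    then have "(\<Sum>u\<in>V. \<Sum>w\<in>V. (if u = x then h w else 0)) = (\<Sum>u\<in>V. (if u = x then sum h V else 0))" by simp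
    also have "\<dots> = sum h V" using xV finV by (simp add: sum.delta)
    finally show ?thesis .
  qed
  also have "(\<Sum>u\<in>V. \<Sum>w\<in>V. (if w = x then h u else 0)) = (\<Sum>w\<in>V. h w)"
    using xV finV by (simp add: sum.delta')
  finally show ?thesis unfolding h_def by (simp add: sum_subtractf)
qed

end

locale part = sg +
  fixes A :: "nat set"
  assumes AV: "A \<subseteq> V" and Amin: "\<And>B. B \<subseteq> V \<Longrightarrow> Iord A \<le> Iord B"
begin

definition same :: "nat \<Rightarrow> nat \<Rightarrow> bool" where "same x y \<longleftrightarrow> (x \<in> A \<longleftrightarrow> y \<in> A)"
definition ii :: "nat \<Rightarrow> real" where "ii x = (\<Sum>y\<in>V. of_bool (adj x y \<and> same x y))"
definition ee :: "nat \<Rightarrow> real" where "ee x = (\<Sum>y\<in>V. of_bool (adj x y \<and> \<not> same x y))"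
definition oo :: "nat \<Rightarrow> real" where "oo x = (\<Sum>y\<in>V. of_bool (\<not> same x y))"
definition kk :: "nat \<Rightarrow> real" where "kk x = (\<Sum>y\<in>V. of_bool (\<not> same x y \<and> \<not> adj x y))"

lemma same_sym: "same x y \<longleftrightarrow> same y x" unfolding same_def by blast
lemma same_trans: "same x y \<Longrightarrow> same y z \<Longrightarrow> same x z" unfolding same_def by blast
lemma same_ntrans: "same x y \<Longrightarrow> \<not> same y z \<Longrightarrow> \<not> same x z" unfolding same_def by blast

lemma ii_le_ee: "x \<in> V \<Longrightarrow> ii x \<le> ee x"
proof -
  assume xV: "x \<in> V"
  let ?A' = "(if x \<in> A then A - {x} else insert x A)"
  have "?A' \<subseteq> V" using AV xV by auto
  then have le: "Iord A \<le> Iord ?A'" by (rule Amin)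
  have fl: "Iord ?A' = Iord A + 2 * (ee x - ii x)"
    using flip[OF xV, of A] unfolding ii_def ee_def same_def by simp
  have "0 \<le> 2 * (ee x - ii x)" using le unfolding fl by simp
  then show ?thesis by simp
qed

lemma deg_split: "deg x = ii x + ee x"
  unfolding deg_def ii_def ee_def by (subst sum.distrib[symmetric]) (intro sum.cong refl, auto)

lemma oo_split: "oo x = ee x + kk x"
  unfolding oo_def ee_def kk_def by (subst sum.distrib[symmetric]) (intro sum.cong refl, auto)

lemma Iord_A: "Iord A = (\<Sum>x\<in>V. ii x)"
  unfolding Iord_def ii_def same_def ..

lemma nonneg: "0 \<le> ii x" "0 \<le> ee x" "0 \<le> oo x" "0 \<le> kk x"
  unfolding ii_def ee_def oo_def kk_def by (auto intro: sum_nonneg)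

lemma split_sum:
  fixes f :: "nat \<Rightarrow> nat \<Rightarrow> real"
  assumes HV: "H \<subseteq> V" and sym: "\<And>x y. f x y = f y x"
  shows "(\<Sum>x\<in>V. \<Sum>y\<in>V. f x y) = (\<Sum>x\<in>H. \<Sum>y\<in>H. f x y) + 2 * (\<Sum>x\<in>H. \<Sum>y\<in>V-H. f x y)
           + (\<Sum>x\<in>V-H. \<Sum>y\<in>V-H. f x y)"
proof -
  have sp: "sum g V = sum g H + sum g (V - H)" for g :: "nat \<Rightarrow> real"
    using sum.subset_diff[OF HV finV, of g] by simp
  have "(\<Sum>x\<in>V. \<Sum>y\<in>V. f x y) = (\<Sum>x\<in>V. (\<Sum>y\<in>H. f x y) + (\<Sum>y\<in>V-H. f x y))"
    by (simp only: sp)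
  also have "\<dots> = (\<Sum>x\<in>V. \<Sum>y\<in>H. f x y) + (\<Sum>x\<in>V. \<Sum>y\<in>V-H. f x y)" by (simp only: sum.distrib)
  also have "\<dots> = ((\<Sum>x\<in>H. \<Sum>y\<in>H. f x y) + (\<Sum>x\<in>V-H. \<Sum>y\<in>H. f x y))
       + ((\<Sum>x\<in>H. \<Sum>y\<in>V-H. f x y) + (\<Sum>x\<in>V-H. \<Sum>y\<in>V-H. f x y))"
    by (simp only: sp)
  also have "(\<Sum>x\<in>V-H. \<Sum>y\<in>H. f x y) = (\<Sum>x\<in>H. \<Sum>y\<in>V-H. f x y)"
    by (subst sum.swap) (simp add: sym)
  finally show ?thesis by simp
qed

lemma card_triple:
  fixes P :: "nat \<Rightarrow> nat \<Rightarrow> nat \<Rightarrow> bool"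
  assumes "finite X" "finite Y" "finite Z"
  shows "(\<Sum>x\<in>X. \<Sum>y\<in>Y. \<Sum>z\<in>Z. (of_bool (P x y z)::real))
         = real (card {p\<in>X\<times>Y\<times>Z. P (fst p) (fst (snd p)) (snd (snd p))})"
proof -
  have "(\<Sum>x\<in>X. \<Sum>y\<in>Y. \<Sum>z\<in>Z. (of_bool (P x y z)::real))
      = (\<Sum>p\<in>X\<times>Y\<times>Z. of_bool (P (fst p) (fst (snd p)) (snd (snd p))))"
    by (simp add: sum.cartesian_product split_def)
  also have "\<dots> = real (card {p\<in>X\<times>Y\<times>Z. P (fst p) (fst (snd p)) (snd (snd p))})"
    using assms by (simp add: sum_ind_card)
  finally show ?thesis .
qed

lemma tri_inj:
  assumes HV: "H \<subseteq> V"
  shows "(\<Sum>x\<in>H. \<Sum>y\<in>V-H. \<Sum>z\<in>V. (of_bool (adj x y \<and> same x y \<and> \<not> same x z \<and> adj x z \<and> adj y z)::real))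
         \<le> real (num_triangles V E)"
proof -
  let ?P = "\<lambda>x y z. adj x y \<and> same x y \<and> \<not> same x z \<and> adj x z \<and> adj y z"
  let ?S = "{p\<in>H\<times>(V-H)\<times>V. ?P (fst p) (fst (snd p)) (snd (snd p))}"
  have finH: "finite H" using HV finV finite_subset by blast
  have c: "(\<Sum>x\<in>H. \<Sum>y\<in>V-H. \<Sum>z\<in>V. (of_bool (?P x y z)::real)) = real (card ?S)"
    by (rule card_triple[OF finH]) (use finV in auto)
  have "card ?S \<le> card (triangles V E)"
  proof (rule card_inj_on_le[where f = "\<lambda>p. {fst p, fst (snd p), snd (snd p)}"])
    show "(\<lambda>p. {fst p, fst (snd p), snd (snd p)}) ` ?S \<subseteq> triangles V E"
    proof
      fix T assume "T \<in> (\<lambda>p. {fst p, fst (snd p), snd (snd p)}) ` ?S"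
      then obtain p where p: "p \<in> ?S" and T: "T = {fst p, fst (snd p), snd (snd p)}" by blast
      have "adj (fst p) (fst (snd p))" "adj (fst (snd p)) (snd (snd p))" "adj (fst p) (snd (snd p))"
        using p adj_sym by auto
      then show "T \<in> triangles V E" unfolding T by (rule tri_mem)
    qed
    show "finite (triangles V E)" by (rule fin_tri)
    show "inj_on (\<lambda>p. {fst p, fst (snd p), snd (snd p)}) ?S"
    proof (rule inj_onI)
      fix p q assume p: "p \<in> ?S" and q: "q \<in> ?S"
        and eq: "{fst p, fst (snd p), snd (snd p)} = {fst q, fst (snd q), snd (snd q)}"
      obtain x y z where pe: "p = (x,y,z)" by (cases p) auto
      obtain x' y' z' where qe: "q = (x',y',z')" by (cases q) auto
      have hp: "x \<in> H" "y \<notin> H" "adj x y" "same x y" "\<not> same x z"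
        using p pe by auto
      have hq: "x' \<in> H" "y' \<notin> H" "adj x' y'" "same x' y'" "\<not> same x' z'"
        using q qe by auto
      have eq': "{x,y,z} = {x',y',z'}" using eq pe qe by simp
      have xy': "x' \<noteq> y'" using hq(3) adj_irr by metis
      have zz: "z' = z"
      proof (rule ccontr)
        assume nz: "z' \<noteq> z"
        have "z' \<in> {x,y,z}" using eq' by blast
        then have "z' = x \<or> z' = y" using nz by blast
        then have sz: "same z' x" "same z' y" using hp(4) same_sym same_trans unfolding same_def by blast+
        have "x' \<in> {x,y,z}" "y' \<in> {x,y,z}" using eq' by blast+
        moreover have "\<not> same x' x" "\<not> same x' y" using hq(5) sz unfolding same_def by blast+
        moreover have "\<not> same y' x" "\<not> same y' y" using hq(4,5) sz unfolding same_def by blast+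
        moreover have "same x x" "same y y" unfolding same_def by blast+
        ultimately have "x' = z" "y' = z" by (metis insertE singletonD)+
        then show False using xy' by simp
      qed
      have "x' \<noteq> z'" "y' \<noteq> z'" using hq(4,5) unfolding same_def by blast+
      then have "x' \<in> {x,y}" "y' \<in> {x,y}" using eq' zz by blast+
      then have xx: "x' = x" using hq(1) hp(2) by blast
      then have "y' = y" using \<open>y' \<in> {x,y}\<close> xy' by blast
      then show "p = q" using pe qe xx zz by simp
    qed
  qed
  then show ?thesis using c by (simp add: num_triangles_def)
qed

definition cz :: "nat \<Rightarrow> nat \<Rightarrow> real" where
  "cz x y = (\<Sum>z\<in>V. of_bool (\<not> same x z \<and> adj x z \<and> adj y z))"

lemma cz_le: "adj x y \<Longrightarrow> cz x y \<le> real (max_book V E)"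
proof -
  assume a: "adj x y"
  have "cz x y \<le> common x y" unfolding cz_def common_def by (intro sum_mono) auto
  then show ?thesis using common_le[OF a] by linarith
qed

lemma cz_ge: "same x y \<Longrightarrow> oo x - kk x - kk y \<le> cz x y"
proof -
  assume s: "same x y"
  have "\<And>z. (of_bool (\<not> same x z)::real) - of_bool (\<not> same x z \<and> \<not> adj x z) - of_bool (\<not> same y z \<and> \<not> adj y z)
      \<le> of_bool (\<not> same x z \<and> adj x z \<and> adj y z)"
    using s unfolding same_def by auto
  then have "(\<Sum>z\<in>V. (of_bool (\<not> same x z)::real) - of_bool (\<not> same x z \<and> \<not> adj x z) - of_bool (\<not> same y z \<and> \<not> adj y z))
      \<le> cz x y" unfolding cz_def by (rule sum_mono)
  then show ?thesis unfolding oo_def kk_def by (simp add: sum_subtractf)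
qed

lemma main:
  fixes \<theta> cm :: real
  defines "H \<equiv> {x\<in>V. \<theta> \<le> kk x}" and "b0 \<equiv> real (max_book V E)"
  assumes tpos: "0 < \<theta>" and cm: "\<And>x. x \<in> V \<Longrightarrow> cm \<le> oo x" and bcm: "b0 + \<theta> \<le> cm"
    and gap: "2 * \<theta> \<le> cm - b0"
    and budget: "(\<Sum>x\<in>V. kk x) + 2 \<le> (\<Sum>x\<in>V. ii x)"
    and hsmall: "2 * real (card H) < \<theta>"
  shows "(b0 + \<theta>) * (cm - (b0 + \<theta>)) - 2 * (b0 + \<theta>) * real (card H) ^ 2 - \<theta> * (\<Sum>x\<in>V. ii x) / 2
           \<le> real (num_triangles V E)
         \<and> cm - 2 * real (card H) ^ 2 \<le> 2 * (b0 + \<theta>)"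
proof -
  define \<beta> where "\<beta> = b0 + \<theta>"
  define h where "h = real (card H)"
  define L where "L = V - H"
  define f where "f x y = (of_bool (adj x y \<and> same x y) :: real)" for x y
  define mi where "mi x y = (of_bool (\<not> same x y \<and> \<not> adj x y) :: real)" for x y
  define D where "D x = (\<Sum>y\<in>L. f x y)" for x
  define F where "F = (\<Sum>x\<in>H. D x)"
  have HV: "H \<subseteq> V" unfolding H_def by blast
  have finH: "finite H" using HV finV finite_subset by blast
  have finL: "finite L" unfolding L_def using finV by simp
  have b0nn: "0 \<le> b0" unfolding b0_def by simp
  have bnn: "0 \<le> \<beta>" unfolding \<beta>_def using b0nn tpos by simp
  have fsym: "f x y = f y x" for x y unfolding f_def by (simp add: adj_sym[of x y] same_sym[of x y])
  have misym: "mi x y = mi y x" for x y unfolding mi_def by (simp add: adj_sym[of x y] same_sym[of x y])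
  have f01: "0 \<le> f x y" "f x y \<le> 1" for x y unfolding f_def by auto
  have mi01: "0 \<le> mi x y" "mi x y \<le> 1" for x y unfolding mi_def by auto
  have light: "x \<in> L \<Longrightarrow> kk x < \<theta>" for x unfolding L_def H_def by auto
  have Lsub: "L \<subseteq> V" unfolding L_def by blast
  have ll: "f x y = 0" if x: "x \<in> L" and y: "y \<in> L" for x y
  proof (rule ccontr)
    assume "f x y \<noteq> 0"
    then have a: "adj x y" and s: "same x y" unfolding f_def by (auto split: if_splits)
    have "oo x - kk x - kk y \<le> cz x y" by (rule cz_ge[OF s])
    moreover have "cz x y \<le> b0" unfolding b0_def by (rule cz_le[OF a])
    moreover have "cm \<le> oo x" using cm x Lsub by blast
    moreover have "kk x < \<theta>" "kk y < \<theta>" using light x y by auto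
    ultimately show False using gap by linarith
  qed
  have sii: "(\<Sum>x\<in>V. ii x) = (\<Sum>x\<in>V. \<Sum>y\<in>V. f x y)" unfolding ii_def f_def ..
  have HHle: "(\<Sum>x\<in>H. \<Sum>y\<in>H. f x y) \<le> h * h"
  proof -
    have "(\<Sum>x\<in>H. \<Sum>y\<in>H. f x y) \<le> (\<Sum>x\<in>H. \<Sum>y\<in>H. (1::real))" by (intro sum_mono f01(2))
    then show ?thesis unfolding h_def by simp
  qed
  have HHnn: "0 \<le> (\<Sum>x\<in>H. \<Sum>y\<in>H. f x y)" by (intro sum_nonneg f01(1))
  have LL0: "(\<Sum>x\<in>L. \<Sum>y\<in>L. f x y) = 0" using ll by simp
  have ii_dec: "(\<Sum>x\<in>V. ii x) = (\<Sum>x\<in>H. \<Sum>y\<in>H. f x y) + 2 * F"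
    using split_sum[OF HV, of f] fsym LL0 unfolding sii F_def D_def L_def by simp
  have skk: "(\<Sum>x\<in>V. kk x) = (\<Sum>x\<in>V. \<Sum>y\<in>V. mi x y)" unfolding kk_def mi_def ..
  have kk_dec: "(\<Sum>x\<in>V. kk x) = (\<Sum>x\<in>H. \<Sum>y\<in>H. mi x y) + 2 * (\<Sum>x\<in>H. \<Sum>y\<in>L. mi x y) + (\<Sum>x\<in>L. \<Sum>y\<in>L. mi x y)"
    using split_sum[OF HV, of mi] misym unfolding skk L_def by simp
  have MHle: "(\<Sum>x\<in>H. \<Sum>y\<in>H. mi x y) \<le> h * h"
  proof -
    have "(\<Sum>x\<in>H. \<Sum>y\<in>H. mi x y) \<le> (\<Sum>x\<in>H. \<Sum>y\<in>H. (1::real))" by (intro sum_mono mi01(2))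
    then show ?thesis unfolding h_def by simp
  qed
  have MHnn: "0 \<le> (\<Sum>x\<in>H. \<Sum>y\<in>H. mi x y)" by (intro sum_nonneg mi01(1))
  have MLnn: "0 \<le> (\<Sum>x\<in>L. \<Sum>y\<in>L. mi x y)" by (intro sum_nonneg mi01(1))
  have kkH: "(\<Sum>x\<in>H. kk x) = (\<Sum>x\<in>H. \<Sum>y\<in>H. mi x y) + (\<Sum>x\<in>H. \<Sum>y\<in>L. mi x y)"
  proof -
    have "kk x = (\<Sum>y\<in>H. mi x y) + (\<Sum>y\<in>L. mi x y)" for x
      unfolding kk_def mi_def L_def using sum.subset_diff[OF HV finV] by (simp add: add.commute)
    then show ?thesis by (simp add: sum.distrib)
  qed
  have kkH_le: "(\<Sum>x\<in>H. kk x) \<le> h * h + (\<Sum>x\<in>V. kk x) / 2"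
    using kkH kk_dec MHle MHnn MLnn by linarith
  have Fge: "(\<Sum>x\<in>H. kk x) - 2 * h * h \<le> F"
    using ii_dec budget kkH_le HHle mult_nonneg_nonneg[of h h] unfolding h_def by linarith
  have Fle: "F \<le> (\<Sum>x\<in>V. ii x) / 2" using ii_dec HHnn by linarith
  have Dnn: "0 \<le> D x" for x unfolding D_def by (intro sum_nonneg f01(1))
  have Dle: "D x \<le> oo x - kk x" if x: "x \<in> H" for x
  proof -
    have "D x \<le> ii x" unfolding D_def ii_def f_def
      by (rule sum_mono2[OF finV Lsub]) simp
    also have "\<dots> \<le> ee x" using ii_le_ee x HV by blast
    finally show ?thesis using oo_split[of x] by simp
  qed
  have Spos: "oo x - \<beta> < kk x" if x: "x \<in> H" and Dp: "0 < D x" for x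
  proof -
    obtain y where y: "y \<in> L" "f x y \<noteq> 0"
    proof (rule ccontr)
      assume "\<not> thesis"
      then have "\<forall>y\<in>L. f x y = 0" using that by blast
      then have "D x = 0" unfolding D_def by simp
      then show False using Dp by simp
    qed
    then have a: "adj x y" and s: "same x y" unfolding f_def by (auto split: if_splits)
    have "oo x - kk x - kk y \<le> cz x y" by (rule cz_ge[OF s])
    moreover have "cz x y \<le> b0" unfolding b0_def by (rule cz_le[OF a])
    moreover have "kk y < \<theta>" using light y by auto
    ultimately show ?thesis unfolding \<beta>_def by linarith
  qed
  have per: "\<beta> * (D x - kk x) + (if 0 < D x then \<beta> * (oo x - \<beta>) else 0) \<le> D x * (oo x - kk x)"
    if x: "x \<in> H" for x
  proof (cases "0 < D x")
    case True
    have k1: "oo x - \<beta> < kk x" by (rule Spos[OF x True])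
    have d1: "D x \<le> oo x - kk x" by (rule Dle[OF x])
    have "0 \<le> (\<beta> - D x) * (kk x - (oo x - \<beta>))" using k1 d1 by (intro mult_nonneg_nonneg) auto
    moreover have "D x * (oo x - kk x) - \<beta> * (D x - kk x) - \<beta> * (oo x - \<beta>) = (\<beta> - D x) * (kk x - (oo x - \<beta>))"
      by (simp add: algebra_simps)
    ultimately show ?thesis using True by simp
  next
    case False
    then have "D x = 0" using Dnn[of x] by simp
    moreover have "0 \<le> \<beta> * kk x" using bnn nonneg(4) by simp
    ultimately show ?thesis by simp
  qed
  have Sne: "\<exists>s\<in>H. 0 < D s"
  proof (rule ccontr)
    assume "\<not> ?thesis"
    then have D0: "\<forall>x\<in>H. D x = 0" using Dnn by (metis not_less order.antisym)
    then have "F = 0" unfolding F_def by simp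
    then have kH: "(\<Sum>x\<in>H. kk x) \<le> 2 * h * h" using Fge by simp
    have "H \<noteq> {}"
    proof
      assume H0: "H = {}"
      then have "L = V" unfolding L_def by simp
      then have "(\<Sum>x\<in>V. \<Sum>y\<in>V. f x y) = 0" using LL0 by simp
      moreover have "0 \<le> (\<Sum>x\<in>V. kk x)" using nonneg(4) by (simp add: sum_nonneg)
      ultimately show False using budget sii by simp
    qed
    then have hpos: "1 \<le> h" unfolding h_def using finH by (simp add: Suc_leI card_gt_0_iff)
    have "(\<Sum>x\<in>H. \<theta>) \<le> (\<Sum>x\<in>H. kk x)" unfolding H_def by (rule sum_mono) simp
    then have "h * \<theta> \<le> 2 * h * h" using kH unfolding h_def by simp
    then have "\<theta> \<le> 2 * h" using hpos by (simp add: mult.assoc)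
    then show False using hsmall unfolding h_def by simp
  qed
  then obtain s where s: "s \<in> H" "0 < D s" by blast
  have sumS: "\<beta> * (cm - \<beta>) \<le> (\<Sum>x\<in>H. (if 0 < D x then \<beta> * (oo x - \<beta>) else 0))"
  proof -
    have nn: "0 \<le> (if 0 < D x then \<beta> * (oo x - \<beta>) else 0)" if "x \<in> H" for x
      using that HV cm[of x] bcm bnn unfolding \<beta>_def by (auto intro!: mult_nonneg_nonneg)
    have "(if 0 < D s then \<beta> * (oo s - \<beta>) else 0) \<le> (\<Sum>x\<in>H. (if 0 < D x then \<beta> * (oo x - \<beta>) else 0))"
      by (rule member_le_sum[OF s(1)]) (use nn finH in auto)
    moreover have "\<beta> * (cm - \<beta>) \<le> \<beta> * (oo s - \<beta>)" using cm[of s] s HV bnn by (intro mult_left_mono) auto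
    ultimately show ?thesis using s by simp
  qed
  have sumper: "\<beta> * (F - (\<Sum>x\<in>H. kk x)) + (\<Sum>x\<in>H. (if 0 < D x then \<beta> * (oo x - \<beta>) else 0))
      \<le> (\<Sum>x\<in>H. D x * (oo x - kk x))"
  proof -
    have "(\<Sum>x\<in>H. \<beta> * (D x - kk x) + (if 0 < D x then \<beta> * (oo x - \<beta>) else 0)) \<le> (\<Sum>x\<in>H. D x * (oo x - kk x))"
      by (rule sum_mono) (rule per)
    then show ?thesis unfolding F_def by (simp add: sum.distrib sum_distrib_left sum_subtractf right_diff_distrib)
  qed
  have tri: "(\<Sum>x\<in>H. D x * (oo x - kk x - \<theta>)) \<le> real (num_triangles V E)"
  proof -
    have inner: "D x * (oo x - kk x - \<theta>) \<le> (\<Sum>y\<in>V-H. \<Sum>z\<in>V. (of_bool (adj x y \<and> same x y \<and> \<not> same x z \<and> adj x z \<and> adj y z)::real))"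
      if x: "x \<in> H" for x
    proof -
      have e1: "(\<Sum>z\<in>V. (of_bool (adj x y \<and> same x y \<and> \<not> same x z \<and> adj x z \<and> adj y z)::real)) = f x y * cz x y" for y
        unfolding f_def cz_def by (cases "adj x y \<and> same x y") auto
      have e2: "f x y * (oo x - kk x - \<theta>) \<le> f x y * cz x y" if y: "y \<in> L" for y
      proof (cases "adj x y \<and> same x y")
        case True
        then have "oo x - kk x - kk y \<le> cz x y" using cz_ge by blast
        then show ?thesis using light[OF y] True unfolding f_def by simp
      next
        case False then show ?thesis unfolding f_def by auto
      qed
      have "D x * (oo x - kk x - \<theta>) = (\<Sum>y\<in>L. f x y * (oo x - kk x - \<theta>))"
        unfolding D_def by (rule sum_distrib_right)
      also have "\<dots> \<le> (\<Sum>y\<in>L. f x y * cz x y)" by (rule sum_mono) (rule e2)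
      also have "\<dots> = (\<Sum>y\<in>V-H. \<Sum>z\<in>V. (of_bool (adj x y \<and> same x y \<and> \<not> same x z \<and> adj x z \<and> adj y z)::real))"
        unfolding L_def e1 ..
      finally show ?thesis .
    qed
    have "(\<Sum>x\<in>H. D x * (oo x - kk x - \<theta>)) \<le> (\<Sum>x\<in>H. \<Sum>y\<in>V-H. \<Sum>z\<in>V. (of_bool (adj x y \<and> same x y \<and> \<not> same x z \<and> adj x z \<and> adj y z)::real))"
      by (rule sum_mono) (rule inner)
    also have "\<dots> \<le> real (num_triangles V E)" by (rule tri_inj[OF HV])
    finally show ?thesis .
  qed
  have tri2: "(\<Sum>x\<in>H. D x * (oo x - kk x)) - \<theta> * F \<le> real (num_triangles V E)"
  proof -
    have "(\<Sum>x\<in>H. D x * (oo x - kk x - \<theta>)) = (\<Sum>x\<in>H. D x * (oo x - kk x)) - \<theta> * F"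
      unfolding F_def by (simp add: right_diff_distrib sum_subtractf sum_distrib_left mult.commute)
    then show ?thesis using tri by simp
  qed
  have hh: "h * h = h ^ 2" by (simp add: power2_eq_square)
  have c1: "\<beta> * (cm - \<beta>) - 2 * \<beta> * h ^ 2 - \<theta> * (\<Sum>x\<in>V. ii x) / 2 \<le> real (num_triangles V E)"
  proof -
    have "\<beta> * (-(2 * h * h)) \<le> \<beta> * (F - (\<Sum>x\<in>H. kk x))" using Fge bnn by (intro mult_left_mono) auto
    then have A1: "- (2 * \<beta> * h ^ 2) \<le> \<beta> * (F - (\<Sum>x\<in>H. kk x))" by (simp add: power2_eq_square algebra_simps)
    have "\<theta> * F \<le> \<theta> * ((\<Sum>x\<in>V. ii x) / 2)" using Fle tpos by (intro mult_left_mono) auto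
    then have A2: "\<theta> * F \<le> \<theta> * (\<Sum>x\<in>V. ii x) / 2" by simp
    show ?thesis using A1 A2 sumS sumper tri2 by linarith
  qed
  have c2: "cm - 2 * h ^ 2 \<le> 2 * \<beta>"
  proof (rule ccontr)
    assume "\<not> ?thesis"
    then have lt: "2 * \<beta> < cm - 2 * h ^ 2" by simp
    define g where "g x = D x - kk x" for x
    have gnp: "g x \<le> 0" if "x \<in> H" for x
    proof (cases "0 < D x")
      case True
      have "oo x - \<beta> < kk x" by (rule Spos[OF that True])
      moreover have "D x \<le> oo x - kk x" by (rule Dle[OF that])
      moreover have "cm \<le> oo x" using cm that HV by blast
      moreover have "0 \<le> h ^ 2" by simp
      ultimately show ?thesis unfolding g_def using lt by linarith
    next
      case False then show ?thesis unfolding g_def using nonneg(4)[of x] Dnn[of x] by simp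
    qed
    have gs: "g s < - 2 * h ^ 2"
    proof -
      have "oo s - \<beta> < kk s" by (rule Spos[OF s])
      moreover have "D s \<le> oo s - kk s" by (rule Dle[OF s(1)])
      moreover have "cm \<le> oo s" using cm s HV by blast
      ultimately show ?thesis unfolding g_def using lt by linarith
    qed
    have "(\<Sum>x\<in>H. g x) = g s + (\<Sum>x\<in>H - {s}. g x)" using sum.remove[OF finH s(1)] by simp
    also have "(\<Sum>x\<in>H - {s}. g x) \<le> 0" by (rule sum_nonpos) (use gnp in auto)
    finally have "(\<Sum>x\<in>H. g x) < - 2 * h ^ 2" using gs by simp
    moreover have "(\<Sum>x\<in>H. g x) = F - (\<Sum>x\<in>H. kk x)" unfolding g_def F_def by (simp add: sum_subtractf)
    ultimately show False using Fge hh by simp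
  qed
  show ?thesis using c1 c2 unfolding \<beta>_def h_def by simp
qed

lemma oo_val: "x \<in> V \<Longrightarrow> oo x = (if x \<in> A then real (card (V - A)) else real (card A))"
proof -
  assume xV: "x \<in> V"
  have "oo x = real (card {y\<in>V. \<not> same x y})" unfolding oo_def using finV by (simp add: sum_ind_card)
  also have "{y\<in>V. \<not> same x y} = (if x \<in> A then V - A else A)" using AV unfolding same_def by auto
  finally show ?thesis by simp
qed

lemma sum_oo: "(\<Sum>x\<in>V. oo x) = 2 * real (card A) * real (card (V - A))"
proof -
  have "(\<Sum>x\<in>V. oo x) = (\<Sum>x\<in>A. oo x) + (\<Sum>x\<in>V - A. oo x)"
    using sum.subset_diff[OF AV finV, of oo] by simp
  also have "(\<Sum>x\<in>A. oo x) = (\<Sum>x\<in>A. real (card (V - A)))" using AV by (intro sum.cong refl) (auto simp: oo_val)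
  also have "(\<Sum>x\<in>V - A. oo x) = (\<Sum>x\<in>V - A. real (card A))" by (intro sum.cong refl) (auto simp: oo_val)
  finally show ?thesis by simp
qed

lemma oo_ge: "x \<in> V \<Longrightarrow> real (min (card A) (card (V - A))) \<le> oo x"
  by (simp add: oo_val)

lemma heavy_count: "0 \<le> \<theta> \<Longrightarrow> real (card {x\<in>V. \<theta> \<le> kk x}) * \<theta> \<le> (\<Sum>x\<in>V. kk x)"
proof -
  assume t: "0 \<le> \<theta>"
  let ?H = "{x\<in>V. \<theta> \<le> kk x}"
  have HV: "?H \<subseteq> V" by blast
  have "real (card ?H) * \<theta> = (\<Sum>x\<in>?H. \<theta>)" by simp
  also have "\<dots> \<le> (\<Sum>x\<in>?H. kk x)" by (rule sum_mono) simp
  also have "\<dots> \<le> (\<Sum>x\<in>V. kk x)" by (rule sum_mono2[OF finV HV]) (simp add: nonneg)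
  finally show ?thesis .
qed

lemma sums: "(\<Sum>x\<in>V. deg x) = (\<Sum>x\<in>V. ii x) + (\<Sum>x\<in>V. ee x)"
            "(\<Sum>x\<in>V. oo x) = (\<Sum>x\<in>V. ee x) + (\<Sum>x\<in>V. kk x)"
  by (simp_all add: deg_split oo_split sum.distrib)
end



lemma final_arith:
  fixes \<alpha> \<epsilon> \<delta> n cm \<beta> h H0 t \<theta> S :: real
  assumes a1: "1/2 < \<alpha>" and a2: "\<alpha> < 1" and e: "0 < \<epsilon>" and d0: "0 < \<delta>"
    and d1: "\<delta> \<le> \<epsilon>/16" and d2: "\<delta> \<le> (1-\<alpha>)/8"
    and cmlo: "(1/2 - \<delta>)*n \<le> cm" and n1: "1 \<le> n" and b0: "0 \<le> \<beta>" and bq: "\<beta> \<le> (\<alpha>/2 + \<delta>)*n"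
    and bp: "cm - 2*h^2 \<le> 2*\<beta>" and h0: "0 \<le> h" and hH: "h \<le> H0" and th: "\<theta> = \<delta>*n"
    and S0: "0 \<le> S" and S1: "S \<le> 3*n/4"
    and tlo: "\<beta>*(cm - \<beta>) - 2*\<beta>*h^2 - \<theta>*S/2 \<le> t"
    and thi: "t \<le> (\<alpha>*(1-\<alpha>) - \<epsilon>)*n^2/4"
    and nbig: "128*(H0^4 + 2*H0^2 + 1)/(13*\<epsilon>) \<le> n"
  shows False
proof -
  define q where "q = (\<alpha>/2 + \<delta>)*n"
  define p where "p = (cm - 2*h^2)/2"
  have n0: "0 \<le> n" using n1 by simp
  have q0: "0 \<le> q" unfolding q_def using a1 d0 n0 by simp
  have pb: "p \<le> \<beta>" unfolding p_def using bp by simp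
  have bq': "\<beta> \<le> q" unfolding q_def by (rule bq)
  have fmin: "min (p*(cm-p)) (q*(cm-q)) \<le> \<beta>*(cm-\<beta>)"
  proof (cases "\<beta> + p \<le> cm")
    case True
    have "0 \<le> (\<beta> - p)*(cm - \<beta> - p)" using True pb by (intro mult_nonneg_nonneg) auto
    then have "p*(cm-p) \<le> \<beta>*(cm-\<beta>)" by (simp add: algebra_simps)
    then show ?thesis by simp
  next
    case False
    have "0 \<le> (q - \<beta>)*(\<beta> + q - cm)" using False pb bq' by (intro mult_nonneg_nonneg) auto
    then have "q*(cm-q) \<le> \<beta>*(cm-\<beta>)" by (simp add: algebra_simps)
    then show ?thesis by simp
  qed
  have aa: "\<alpha>*(1-\<alpha>) \<le> 1/4"
  proof -
    have "0 \<le> (\<alpha> - 1/2)^2" by simp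
    then show ?thesis by (simp add: power2_eq_square algebra_simps)
  qed
  have cmnn: "0 \<le> (1/2 - \<delta>)*n" using d2 a1 n0 by simp
  have fq: "(\<alpha>*(1-\<alpha>)/4 - 2*\<delta>)*n^2 \<le> q*(cm-q)"
  proof -
    have "q*((1/2 - \<delta>)*n - q) \<le> q*(cm - q)" using q0 cmlo by (intro mult_left_mono) auto
    moreover have "q*((1/2 - \<delta>)*n - q) = ((\<alpha>/2+\<delta>)*((1-\<alpha>)/2 - 2*\<delta>))*n^2"
      unfolding q_def power2_eq_square by (simp add: field_simps)
    moreover have "\<alpha>*(1-\<alpha>)/4 - 2*\<delta> \<le> (\<alpha>/2+\<delta>)*((1-\<alpha>)/2 - 2*\<delta>)"
    proof -
      have "0 \<le> \<delta>*(5/2 - 3/2*\<alpha> - 2*\<delta>)" using d0 d2 a2 by (intro mult_nonneg_nonneg) auto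
      moreover have "(\<alpha>/2+\<delta>)*((1-\<alpha>)/2 - 2*\<delta>) - (\<alpha>*(1-\<alpha>)/4 - 2*\<delta>) = \<delta>*(5/2 - 3/2*\<alpha> - 2*\<delta>)"
        by (simp add: field_simps)
      ultimately show ?thesis by linarith
    qed
    ultimately show ?thesis
      using mult_right_mono[of "\<alpha>*(1-\<alpha>)/4 - 2*\<delta>" "(\<alpha>/2+\<delta>)*((1-\<alpha>)/2 - 2*\<delta>)" "n^2"] by simp
  qed
  have fp: "(\<alpha>*(1-\<alpha>)/4 - 2*\<delta>)*n^2 - H0^4 \<le> p*(cm-p)"
  proof -
    have e1: "p*(cm-p) = (cm^2 - 4*h^4)/4" unfolding p_def by (simp add: power2_eq_square field_simps power4_eq_xxxx)
    have "((1/2 - \<delta>)*n)^2 \<le> cm^2" using cmlo cmnn by (intro power_mono) auto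
    moreover have "h^4 \<le> H0^4" using h0 hH by (intro power_mono) auto
    moreover have "(\<alpha>*(1-\<alpha>)/4 - 2*\<delta>)*n^2 \<le> ((1/2 - \<delta>)*n)^2/4"
    proof -
      have sq: "(1/2-\<delta>)^2 = 1/4 - \<delta> + \<delta>^2" by (simp add: power2_eq_square field_simps)
      have "0 \<le> \<delta>^2" by simp
      then have "\<alpha>*(1-\<alpha>)/4 - 2*\<delta> \<le> (1/2-\<delta>)^2/4" using aa d0 sq by linarith
      then have "(\<alpha>*(1-\<alpha>)/4 - 2*\<delta>)*n^2 \<le> ((1/2-\<delta>)^2/4)*n^2" by (intro mult_right_mono) auto
      then show ?thesis by (simp add: power_mult_distrib)
    qed
    moreover have "(cm^2 - 4*h^4)/4 = cm^2/4 - h^4" by simp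
    ultimately show ?thesis using e1 by (simp add: divide_right_mono)
  qed
  have fb: "(\<alpha>*(1-\<alpha>)/4 - 2*\<delta>)*n^2 - H0^4 \<le> \<beta>*(cm-\<beta>)"
  proof -
    have H4: "0 \<le> H0^4" using h0 hH by simp
    show ?thesis using fmin fq fp H4 by (simp add: min_def split: if_splits; linarith)
  qed
  have t2: "2*\<beta>*h^2 \<le> 2*n*H0^2"
  proof -
    have "\<beta> \<le> n" using bq a2 d2 n0
    proof -
      have "(\<alpha>/2 + \<delta>) \<le> 1" using a2 d2 by simp
      then have "(\<alpha>/2 + \<delta>)*n \<le> 1*n" using n0 by (intro mult_right_mono) auto
      then show ?thesis using bq by simp
    qed
    moreover have "h^2 \<le> H0^2" using h0 hH by (intro power_mono) auto
    ultimately have "\<beta>*h^2 \<le> n*H0^2" using b0 by (intro mult_mono) auto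
    then show ?thesis by simp
  qed
  have t3: "\<theta>*S/2 \<le> 3/8*(\<delta>*n^2)"
  proof -
    have "\<theta>*S \<le> (\<delta>*n)*(3*n/4)" unfolding th using d0 n0 S1 by (intro mult_left_mono) auto
    moreover have "(\<delta>*n)*(3*n/4) = 3/4*(\<delta>*n^2)" by (simp add: power2_eq_square)
    ultimately show ?thesis by linarith
  qed
  have E1: "(\<alpha>*(1-\<alpha>)/4 - 2*\<delta>)*n^2 = \<alpha>*(1-\<alpha>)*n^2/4 - 2*(\<delta>*n^2)" by (simp add: field_simps)
  have E2: "(\<alpha>*(1-\<alpha>) - \<epsilon>)*n^2/4 = \<alpha>*(1-\<alpha>)*n^2/4 - \<epsilon>*n^2/4" by (simp add: field_simps)
  have key: "\<epsilon>*n^2/4 \<le> 19/8*(\<delta>*n^2) + H0^4 + 2*n*H0^2"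
    using fb t2 t3 tlo thi E1 E2 by linarith
  have "19/8*(\<delta>*n^2) \<le> 19/8*(\<epsilon>/16*n^2)" using d1 by (intro mult_left_mono mult_right_mono) auto
  then have key2: "13/128*\<epsilon>*n^2 \<le> H0^4 + 2*n*H0^2" using key by simp
  have "H0^4 + 2*H0^2 + 1 \<le> 13/128*\<epsilon>*n" using nbig e by (simp add: field_simps)
  then have "(H0^4 + 2*H0^2 + 1)*n \<le> (13/128*\<epsilon>*n)*n" using n0 by (intro mult_right_mono) auto
  then have "(H0^4 + 2*H0^2 + 1)*n \<le> 13/128*\<epsilon>*n^2" by (simp add: power2_eq_square)
  moreover have "H0^4 \<le> H0^4 * n"
  proof -
    have "0 \<le> H0^4" using h0 hH by simp
    then have "H0^4 * 1 \<le> H0^4 * n" by (rule mult_left_mono[OF n1])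
    then show ?thesis by simp
  qed
  ultimately show False using key2 n1 by (simp add: algebra_simps)
qed



lemma graph_case:
  fixes \<alpha> \<epsilon> \<delta> H0 :: real and V :: "nat set" and E :: "nat set set" and n :: nat
  assumes a1: "1/2 < \<alpha>" and a2: "\<alpha> < 1" and e: "0 < \<epsilon>"
    and dd: "\<delta> = min (\<epsilon>/16) ((1-\<alpha>)/8)" and H0d: "H0 = 3/(4*\<delta>)"
    and nbig: "3/(8*\<delta>^2) + 2*H0/\<delta> + 128*(H0^4 + 2*H0^2 + 1)/(13*\<epsilon>) < real n"
    and G: "simple_graph V E" and cV: "card V = n" and cE: "n^2 div 4 + 1 \<le> card E"
    and bk: "real (max_book V E) < \<alpha> * real n / 2"
  shows "(\<alpha> * (1 - \<alpha>) - \<epsilon>) * real n ^ 2 / 4 < real (num_triangles V E)"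
proof (rule ccontr)
  assume "\<not> ?thesis"
  then have tT: "real (num_triangles V E) \<le> (\<alpha> * (1 - \<alpha>) - \<epsilon>) * real n ^ 2 / 4" by simp
  interpret sg V E by (rule sg.intro[OF G])
  let ?t = "real (num_triangles V E)"
  let ?n = "real n"
  have d0: "0 < \<delta>" using dd e a2 by simp
  have d1: "\<delta> \<le> \<epsilon>/16" "\<delta> \<le> (1-\<alpha>)/8" unfolding dd by (rule min.cobounded1, rule min.cobounded2)
  have H0pos: "0 < H0" using H0d d0 by simp
  have N1: "3/(8*\<delta>^2) < ?n" and N2: "2*H0/\<delta> < ?n" and N3: "128*(H0^4 + 2*H0^2 + 1)/(13*\<epsilon>) \<le> ?n"
  proof -
    have p1: "0 \<le> 3/(8*\<delta>^2)" using d0 by simp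
    have p2: "0 \<le> 2*H0/\<delta>" using d0 H0pos by simp
    have p3: "0 \<le> 128*(H0^4 + 2*H0^2 + 1)/(13*\<epsilon>)" using e by (simp add: add_nonneg_nonneg)
    show "3/(8*\<delta>^2) < ?n" "2*H0/\<delta> < ?n" "128*(H0^4 + 2*H0^2 + 1)/(13*\<epsilon>) \<le> ?n"
      using nbig p1 p2 p3 by linarith+
  qed
  have n1: "1 \<le> ?n"
  proof -
    have "0 < ?n" using N2 d0 H0pos by (smt (verit) divide_pos_pos)
    then show ?thesis by simp
  qed
  have aa: "\<alpha>*(1-\<alpha>) \<le> 1/4"
  proof -
    have "0 \<le> (\<alpha> - 1/2)^2" by simp
    then show ?thesis by (simp add: power2_eq_square algebra_simps)
  qed
  have Tle: "(\<alpha> * (1 - \<alpha>) - \<epsilon>) * ?n ^ 2 / 4 \<le> ?n^2/16"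
  proof -
    have "(\<alpha> * (1 - \<alpha>) - \<epsilon>) * ?n ^ 2 \<le> (1/4) * ?n^2" using aa e by (intro mult_right_mono) auto
    then show ?thesis by linarith
  qed
  have m4nat: "n^2 < 4 * card E"
  proof -
    have "n^2 = 4 * (n^2 div 4) + n^2 mod 4" by simp
    moreover have "n^2 mod 4 < 4" by simp
    ultimately show ?thesis using cE by linarith
  qed
  have m4: "?n^2 \<le> 4 * real (card E)"
  proof -
    have "real (n^2) \<le> real (4 * card E)" using m4nat by linarith
    then show ?thesis by simp
  qed
  have Vne: "V \<noteq> {}" using cV n1 by auto
  obtain v where v: "v \<in> V" "?n * Iord {x\<in>V. adj v x} \<le> 2 * tau"
    using avg_exists[OF Vne] m4 cV by auto
  obtain A where AV: "A \<subseteq> V" and Amin: "\<forall>B. B \<subseteq> V \<longrightarrow> Iord A \<le> Iord B"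
    using exists_min by blast
  have IA: "?n * Iord A \<le> 12 * ?t"
  proof -
    have "Iord A \<le> Iord {x\<in>V. adj v x}" using Amin by auto
    then have "?n * Iord A \<le> ?n * Iord {x\<in>V. adj v x}" using n1 by (intro mult_left_mono) auto
    then show ?thesis using v tau_le by linarith
  qed
  have IA2: "Iord A \<le> 3 * ?n / 4"
  proof -
    have eq: "?n * (3 * ?n / 4) = 3/4 * ?n^2" by (simp add: power2_eq_square)
    have "?n * Iord A \<le> ?n * (3 * ?n / 4)" unfolding eq using IA tT Tle by linarith
    then show ?thesis using n1 by simp
  qed
  interpret part V E A by (rule part.intro[OF sg.intro[OF G]]) (unfold_locales, use AV Amin in auto)
  let ?S = "(\<Sum>x\<in>V. ii x)"
  let ?K = "(\<Sum>x\<in>V. kk x)"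
  let ?a = "card A" let ?c = "card (V - A)"
  have ac_n: "?a + ?c = n" using AV finV cV by (metis card_Diff_subset card_mono le_add_diff_inverse finite_subset)
  have SI: "?S = Iord A" using Iord_A by simp
  have Knn: "0 \<le> ?K" using nonneg(4) by (simp add: sum_nonneg)
  have acle: "?a * ?c + 1 \<le> card E"
  proof -
    have "real (4 * (?a * ?c)) \<le> real (n^2)"
    proof -
      have "0 \<le> (real ?a - real ?c)^2" by simp
      moreover have "real n = real ?a + real ?c" using ac_n by linarith
      ultimately show ?thesis by (simp add: power2_eq_square algebra_simps)
    qed
    then have "?a * ?c * 4 \<le> n^2" by linarith
    then have "?a * ?c \<le> n^2 div 4" by (simp add: less_eq_div_iff_mult_less_eq)
    then show ?thesis using cE by linarith
  qed
  have budget: "?K + 2 \<le> ?S"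
  proof -
    have "(\<Sum>x\<in>V. deg x) = 2 * real (card E)" by (rule handshake)
    moreover have "real (?a * ?c + 1) \<le> real (card E)" using acle by linarith
    ultimately show ?thesis using sums sum_oo by simp
  qed
  define cm where "cm = real (min ?a ?c)"
  have cmV: "\<And>x. x \<in> V \<Longrightarrow> cm \<le> oo x" unfolding cm_def by (rule oo_ge)
  have cmlo: "(1/2 - \<delta>) * ?n \<le> cm"
  proof -
    have "2 * real (card E) \<le> ?S + 2 * real ?a * real ?c"
      using handshake sums sum_oo Knn by simp
    then have "?n^2 - 3 * ?n / 2 \<le> 4 * real ?a * real ?c" using m4 IA2 SI by simp
    moreover have nac: "?n = real ?a + real ?c" using ac_n by linarith
    moreover have "(?n - 2 * cm)^2 = ?n^2 - 4 * real ?a * real ?c"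
      unfolding cm_def nac by (cases "?a \<le> ?c") (simp_all add: min_def power2_eq_square algebra_simps)
    ultimately have sq: "(?n - 2 * cm)^2 \<le> 3 * ?n / 2" by linarith
    show ?thesis
    proof (rule ccontr)
      assume "\<not> ?thesis"
      then have "2 * \<delta> * ?n < ?n - 2 * cm" by (simp add: algebra_simps)
      moreover have "0 \<le> 2 * \<delta> * ?n" using d0 n1 by simp
      ultimately have "(2 * \<delta> * ?n)^2 < (?n - 2 * cm)^2" by (rule power_strict_mono) auto
      then have "4 * \<delta>^2 * ?n * ?n < 3 * ?n / 2" using sq by (simp add: power2_eq_square algebra_simps)
      then have "4 * \<delta>^2 * ?n < 3 / 2" using n1 by (simp add: mult.assoc)
      then have "?n < 3/(8*\<delta>^2)" using d0 by (simp add: field_simps)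
      then show False using N1 by simp
    qed
  qed
  define \<theta> where "\<theta> = \<delta> * ?n"
  define b0 where "b0 = real (max_book V E)"
  define H where "H = {x\<in>V. \<theta> \<le> kk x}"
  have tpos: "0 < \<theta>" unfolding \<theta>_def using d0 n1 by simp
  have b0nn: "0 \<le> b0" unfolding b0_def by simp
  have b0lt: "b0 < \<alpha> * ?n / 2" unfolding b0_def using bk .
  have lin1: "(\<alpha>/2 + \<delta>) * ?n \<le> (1/2 - \<delta>) * ?n - \<delta> * ?n"
  proof -
    have "0 \<le> (1/2 - \<alpha>/2 - 3*\<delta>) * ?n" using d1 a2 n1 by (intro mult_nonneg_nonneg) auto
    then show ?thesis by (simp add: algebra_simps)
  qed
  have bq: "b0 + \<theta> \<le> (\<alpha>/2 + \<delta>) * ?n" using b0lt unfolding \<theta>_def by (simp add: algebra_simps)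
  have bcm: "b0 + \<theta> \<le> cm" using bq lin1 cmlo tpos unfolding \<theta>_def by linarith
  have gap: "2 * \<theta> \<le> cm - b0" using bq lin1 cmlo unfolding \<theta>_def by (simp add: algebra_simps)
  have hH0: "real (card H) \<le> H0"
  proof -
    have "real (card H) * \<theta> \<le> ?K" unfolding H_def by (rule heavy_count) (use tpos in simp)
    also have "\<dots> \<le> 3 * ?n / 4" using budget IA2 SI by simp
    finally have k: "real (card H) * \<theta> \<le> 3 * ?n / 4" .
    have e3: "(3/(4*\<delta>)) * \<theta> = 3*?n/4" unfolding \<theta>_def using d0 by (simp add: field_simps)
    have "real (card H) * \<theta> \<le> H0 * \<theta>" using k e3 unfolding H0d by simp
    then show ?thesis using tpos by (rule mult_right_le_imp_le)
  qed
  have hsmall: "2 * real (card H) < \<theta>"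
  proof -
    have "2 * H0 < \<delta> * ?n" using N2 d0 by (simp add: field_simps)
    then show ?thesis unfolding \<theta>_def using hH0 by simp
  qed
  have M: "(b0 + \<theta>) * (cm - (b0 + \<theta>)) - 2 * (b0 + \<theta>) * real (card H) ^ 2 - \<theta> * ?S / 2 \<le> ?t
         \<and> cm - 2 * real (card H) ^ 2 \<le> 2 * (b0 + \<theta>)"
    unfolding H_def b0_def
    by (rule main[OF tpos cmV _ _ budget]) (use bcm gap hsmall in \<open>simp_all add: H_def b0_def\<close>)
  show False
  proof (rule final_arith[OF a1 a2 e d0 d1(1) d1(2) cmlo n1 _ bq _ _ hH0 \<theta>_def _ _ _ tT N3])
    show "0 \<le> b0 + \<theta>" using b0nn tpos by simp
    show "cm - 2 * (real (card H))^2 \<le> 2 * (b0 + \<theta>)" using M by simp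
    show "0 \<le> real (card H)" by simp
    show "0 \<le> ?S" using budget Knn by simp
    show "?S \<le> 3 * ?n / 4" using IA2 SI by simp
    show "(b0 + \<theta>) * (cm - (b0 + \<theta>)) - 2 * (b0 + \<theta>) * real (card H) ^ 2 - \<theta> * ?S / 2 \<le> ?t" using M by simp
  qed
qed

theorem theorem1:
  fixes \<alpha> \<epsilon> :: real
  assumes "1/2 < \<alpha>" and "\<alpha> < 1" and "\<epsilon> > 0"
  shows "\<exists>n0::nat. \<forall>n > n0. \<forall>(V :: nat set) E.
           simple_graph V E \<and> card V = n \<and> card E \<ge> n^2 div 4 + 1
           \<and> real (max_book V E) < \<alpha> * real n / 2
           \<longrightarrow> real (num_triangles V E) > (\<alpha> * (1 - \<alpha>) - \<epsilon>) * real n ^ 2 / 4"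
proof -
  define \<delta> where "\<delta> = min (\<epsilon>/16) ((1-\<alpha>)/8)"
  define H0 where "H0 = 3/(4*\<delta>)"
  obtain n0 :: nat where n0: "3/(8*\<delta>^2) + 2*H0/\<delta> + 128*(H0^4 + 2*H0^2 + 1)/(13*\<epsilon>) \<le> real n0"
    using real_arch_simple by blast
  show ?thesis
  proof (intro exI allI impI)
    fix n :: nat and V :: "nat set" and E
    assume n: "n0 < n"
      and h: "simple_graph V E \<and> card V = n \<and> card E \<ge> n^2 div 4 + 1 \<and> real (max_book V E) < \<alpha> * real n / 2"
    have "3/(8*\<delta>^2) + 2*H0/\<delta> + 128*(H0^4 + 2*H0^2 + 1)/(13*\<epsilon>) < real n" using n0 n by linarith
    then show "real (num_triangles V E) > (\<alpha> * (1 - \<alpha>) - \<epsilon>) * real n ^ 2 / 4"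
      using graph_case[OF assms(1,2,3) \<delta>_def H0_def] h by blast
  qed
qed

end
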